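(* Let $L\ge2$ and let $X=(X_0,\dots,X_{L-1})^T\sim\mathcal{N}(0,\Sigma_X)$ be a centered Gaussian vector with $\mathbb{E}[X_i^2]=1$ for all $i$. Then for every $0\le\ell\le L-1$ and every $\beta>0$, $\mathbb{E}[X_\ell\, p_{\ell,\beta}(X)]\ge 0$. If moreover the off-diagonal covariance entries satisfy $[\Sigma_X]_{ij}<1$ for all $i\neq j$, then the inequality is strict.
   Context: For $Q\in\mathbb{R}^L$ and $\beta>0$, $p_{\ell,\beta}(Q)=\frac{\exp(\beta Q_\ell)}{\sum_{r=0}^{L-1}\exp(\beta Q_r)}$. *)

theory Defs
  imports "HOL-Probability.Probability"
begin

text \<open>Softmax: p_{l,beta}(Q) = exp(beta Q_l) / sum_{r<L} exp(beta Q_r), for Q in R^L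
  represented as a function nat => real (only indices < L matter).\<close>
definition softmax :: "nat \<Rightarrow> real \<Rightarrow> nat \<Rightarrow> (nat \<Rightarrow> real) \<Rightarrow> real" where
  "softmax L \<beta> l Q = exp (\<beta> * Q l) / (\<Sum>r<L. exp (\<beta> * Q r))"

definition centered_gaussian_vector :: "'a measure \<Rightarrow> nat \<Rightarrow> (nat \<Rightarrow> 'a \<Rightarrow> real) \<Rightarrow> bool" where
  "centered_gaussian_vector M L X \<longleftrightarrow>
     (\<forall>i<L. X i \<in> borel_measurable M) \<and>
     (\<forall>c :: nat \<Rightarrow> real.
        let Y = (\<lambda>\<omega>. \<Sum>i<L. c i * X i \<omega>) in
          (AE \<omega> in M. Y \<omega> = 0) \<or>
          (\<exists>\<sigma>>0. distributed M lborel Y (\<lambda>x. ennreal (normal_density 0 \<sigma> x))))"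

end

theory Submission
  imports Defs
begin

lemma K_R:
  fixes M :: "'a measure" and a b hU hV :: "'a \<Rightarrow> real"
  assumes P: "prob_space M"
    and [measurable]: "a \<in> borel_measurable M" "b \<in> borel_measurable M"
      "hU \<in> borel_measurable M" "hV \<in> borel_measurable M"
    and dist: "distr M lborel a = distr M lborel b"
    and bU: "\<And>\<omega>. \<bar>hU \<omega>\<bar> \<le> C" and bV: "\<And>\<omega>. \<bar>hV \<omega>\<bar> \<le> C"
    and eq: "\<And>t. (CLINT \<omega>|M. complex_of_real (hU \<omega>) * iexp (t * a \<omega>))
                 = (CLINT \<omega>|M. complex_of_real (hV \<omega>) * iexp (t * b \<omega>))"
    and B: "B \<in> sets borel"
  shows "(LINT \<omega>|M. hU \<omega> * indicator B (a \<omega>)) = (LINT \<omega>|M. hV \<omega> * indicator B (b \<omega>))"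
proof -
  interpret prob_space M by fact
  have C0: "0 \<le> C" using bU[of undefined] by simp
  define gU where "gU \<omega> = hU \<omega> + C" for \<omega>
  define gV where "gV \<omega> = hV \<omega> + C" for \<omega>
  have [measurable]: "gU \<in> borel_measurable M" "gV \<in> borel_measurable M"
    unfolding gU_def gV_def by measurable
  have gU0: "\<And>\<omega>. 0 \<le> gU \<omega>" and gV0: "\<And>\<omega>. 0 \<le> gV \<omega>"
    using bU bV unfolding gU_def gV_def by (auto simp: abs_le_iff) (smt (verit) bU bV)+
  have iexp_eq: "(CLINT \<omega>|M. iexp (t * a \<omega>)) = (CLINT \<omega>|M. iexp (t * b \<omega>))" for t
  proof -
    have "(CLINT \<omega>|M. iexp (t * a \<omega>)) = (CLINT x|distr M lborel a. iexp (t * x))"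
      by (subst integral_distr) auto
    also have "\<dots> = (CLINT x|distr M lborel b. iexp (t * x))" by (simp add: dist)
    also have "\<dots> = (CLINT \<omega>|M. iexp (t * b \<omega>))"
      by (subst integral_distr) auto
    finally show ?thesis .
  qed
  have eqg: "(CLINT \<omega>|M. complex_of_real (gU \<omega>) * iexp (t * a \<omega>))
                 = (CLINT \<omega>|M. complex_of_real (gV \<omega>) * iexp (t * b \<omega>))" for t
  proof -
    have n1: "norm (iexp x) \<le> 1" for x by simp
    have "(CLINT \<omega>|M. complex_of_real (gU \<omega>) * iexp (t * a \<omega>))
        = (CLINT \<omega>|M. complex_of_real (hU \<omega>) * iexp (t * a \<omega>)) + C * (CLINT \<omega>|M. iexp (t * a \<omega>))"
    proof -
      have i1: "integrable M (\<lambda>\<omega>. complex_of_real (hU \<omega>) * iexp (t * a \<omega>))"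
        by (intro integrable_const_bound[where B=C]) (auto simp: norm_mult bU)
      have i2: "integrable M (\<lambda>\<omega>. iexp (t * a \<omega>))"
        by (intro integrable_const_bound[where B=1]) auto
      show ?thesis unfolding gU_def of_real_add distrib_right
        using Bochner_Integration.integral_add[OF i1 integrable_mult_right[OF i2, of "complex_of_real C"]] by simp
    qed
    also have "\<dots> = (CLINT \<omega>|M. complex_of_real (hV \<omega>) * iexp (t * b \<omega>)) + C * (CLINT \<omega>|M. iexp (t * b \<omega>))"
      using eq iexp_eq by simp
    also have "\<dots> = (CLINT \<omega>|M. complex_of_real (gV \<omega>) * iexp (t * b \<omega>))"
    proof -
      have i1: "integrable M (\<lambda>\<omega>. complex_of_real (hV \<omega>) * iexp (t * b \<omega>))"
        by (intro integrable_const_bound[where B=C]) (auto simp: norm_mult bV)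
      have i2: "integrable M (\<lambda>\<omega>. iexp (t * b \<omega>))"
        by (intro integrable_const_bound[where B=1]) auto
      show ?thesis unfolding gV_def of_real_add distrib_right
        using Bochner_Integration.integral_add[OF i1 integrable_mult_right[OF i2, of "complex_of_real C"]] by simp
    qed
    finally show ?thesis .
  qed
  have m: "(LINT \<omega>|M. gU \<omega>) = (LINT \<omega>|M. gV \<omega>)"
    using eqg[of 0] by simp
  have iU: "integrable M gU"
    by (intro integrable_const_bound[where B="2*C"] AE_I2) (use bU gU0 in \<open>auto simp: gU_def abs_le_iff\<close>)
  have iV: "integrable M gV"
    by (intro integrable_const_bound[where B="2*C"] AE_I2) (use bV gV0 in \<open>auto simp: gV_def abs_le_iff\<close>)
  have main: "(LINT \<omega>|M. gU \<omega> * indicator B (a \<omega>)) = (LINT \<omega>|M. gV \<omega> * indicator B (b \<omega>))"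
  proof (cases "(LINT \<omega>|M. gU \<omega>) = 0")
    case True
    have "AE \<omega> in M. gU \<omega> = 0" using integral_nonneg_eq_0_iff_AE[OF iU] gU0 True by auto
    hence 1: "(LINT \<omega>|M. gU \<omega> * indicator B (a \<omega>)) = 0"
      by (intro integral_eq_zero_AE) auto
    have "AE \<omega> in M. gV \<omega> = 0" using integral_nonneg_eq_0_iff_AE[OF iV] gV0 True m by auto
    hence 2: "(LINT \<omega>|M. gV \<omega> * indicator B (b \<omega>)) = 0"
      by (intro integral_eq_zero_AE) auto
    show ?thesis using 1 2 by simp
  next
    case False
    define mm where "mm = (LINT \<omega>|M. gU \<omega>)"
    have mpos: "mm > 0" using False integral_nonneg_AE[of gU M] gU0 unfolding mm_def
      by (smt (verit) AE_I2)
    have mV: "mm = (LINT \<omega>|M. gV \<omega>)" using m mm_def by simp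
    define NU where "NU = distr (density M (\<lambda>\<omega>. ennreal (gU \<omega> / mm))) lborel a"
    define NV where "NV = distr (density M (\<lambda>\<omega>. ennreal (gV \<omega> / mm))) lborel b"
    have rd: "real_distribution (distr (density M (\<lambda>\<omega>. ennreal (g \<omega> / mm))) lborel c)"
      if [measurable]: "g \<in> borel_measurable M" "c \<in> borel_measurable M"
        and g0: "\<And>\<omega>. 0 \<le> g \<omega>" and ig: "integrable M g" and gm: "(LINT \<omega>|M. g \<omega>) = mm" for g c
    proof -
      have "emeasure (distr (density M (\<lambda>\<omega>. ennreal (g \<omega> / mm))) lborel c) UNIV
          = emeasure (density M (\<lambda>\<omega>. ennreal (g \<omega> / mm))) (space M)"
        by (subst emeasure_distr) auto
      also have "\<dots> = (\<integral>\<^sup>+\<omega>. ennreal (g \<omega> / mm) \<partial>M)"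
        by (subst emeasure_density) (auto intro!: nn_integral_cong simp: indicator_def)
      also have "\<dots> = ennreal (LINT \<omega>|M. g \<omega> / mm)"
        by (rule nn_integral_eq_integral) (use ig g0 mpos in auto)
      also have "\<dots> = 1" using gm mpos by simp
      finally have "prob_space (distr (density M (\<lambda>\<omega>. ennreal (g \<omega> / mm))) lborel c)"
        by (intro prob_spaceI) simp
      then show ?thesis unfolding real_distribution_def real_distribution_axioms_def by simp
    qed
    have rdU: "real_distribution NU" unfolding NU_def by (rule rd) (use gU0 iU mm_def in auto)
    have rdV: "real_distribution NV" unfolding NV_def by (rule rd) (use gV0 iV mV in auto)
    have chr: "char (distr (density M (\<lambda>\<omega>. ennreal (g \<omega> / mm))) lborel c) t
        = (CLINT \<omega>|M. complex_of_real (g \<omega>) * iexp (t * c \<omega>)) / mm"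
      if [measurable]: "g \<in> borel_measurable M" "c \<in> borel_measurable M"
        and g0: "\<And>\<omega>. 0 \<le> g \<omega>" for g c t
    proof -
      have "char (distr (density M (\<lambda>\<omega>. ennreal (g \<omega> / mm))) lborel c) t
          = (CLINT \<omega>|density M (\<lambda>\<omega>. ennreal (g \<omega> / mm)). iexp (t * c \<omega>))"
        unfolding char_def by (subst integral_distr) auto
      also have "\<dots> = (CLINT \<omega>|M. (g \<omega> / mm) *\<^sub>R iexp (t * c \<omega>))"
        by (subst integral_density) (use g0 mpos in auto)
      also have "\<dots> = (CLINT \<omega>|M. complex_of_real (g \<omega>) * iexp (t * c \<omega>) / mm)"
        by (simp add: scaleR_conv_of_real)
      finally show ?thesis by simp
    qed
    have "char NU = char NV"
    proof
      fix t show "char NU t = char NV t"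
        unfolding NU_def NV_def chr[OF \<open>gU \<in> borel_measurable M\<close> \<open>a \<in> borel_measurable M\<close> gU0]
          chr[OF \<open>gV \<in> borel_measurable M\<close> \<open>b \<in> borel_measurable M\<close> gV0] eqg ..
    qed
    hence NUV: "NU = NV" using Levy_uniqueness rdU rdV by blast
    have ind: "(LINT x|distr (density M (\<lambda>\<omega>. ennreal (g \<omega> / mm))) lborel c. (indicator B x :: real))
        = (LINT \<omega>|M. g \<omega> * indicator B (c \<omega>)) / mm"
      if [measurable]: "g \<in> borel_measurable M" "c \<in> borel_measurable M"
        and g0: "\<And>\<omega>. 0 \<le> g \<omega>" for g c
    proof -
      have "(LINT x|distr (density M (\<lambda>\<omega>. ennreal (g \<omega> / mm))) lborel c. (indicator B x :: real))
          = (LINT \<omega>|density M (\<lambda>\<omega>. ennreal (g \<omega> / mm)). indicator B (c \<omega>))"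
        using B by (subst integral_distr) auto
      also have "\<dots> = (LINT \<omega>|M. (g \<omega> / mm) * indicator B (c \<omega>))"
        by (subst integral_density) (use g0 mpos B in auto)
      finally show ?thesis by simp
    qed
    have "(LINT \<omega>|M. gU \<omega> * indicator B (a \<omega>)) / mm = (LINT \<omega>|M. gV \<omega> * indicator B (b \<omega>)) / mm"
      using ind[of gU a] ind[of gV b] NUV gU0 gV0 unfolding NU_def NV_def by simp
    then show ?thesis using mpos by simp
  qed
  have ind: "(LINT \<omega>|M. indicator B (a \<omega>)) = (LINT \<omega>|M. (indicator B (b \<omega>)::real))"
  proof -
    have "(LINT \<omega>|M. indicator B (a \<omega>)) = (LINT x|distr M lborel a. (indicator B x::real))"
      using B by (subst integral_distr) auto
    also have "\<dots> = (LINT x|distr M lborel b. (indicator B x::real))" by (simp add: dist)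
    also have "\<dots> = (LINT \<omega>|M. indicator B (b \<omega>))"
      using B by (subst integral_distr) auto
    finally show ?thesis .
  qed
  have "(LINT \<omega>|M. hU \<omega> * indicator B (a \<omega>)) = (LINT \<omega>|M. gU \<omega> * indicator B (a \<omega>)) - C * (LINT \<omega>|M. indicator B (a \<omega>))"
  proof -
    have i1: "integrable M (\<lambda>\<omega>. gU \<omega> * indicator B (a \<omega>))"
      proof (intro integrable_const_bound[where B="2*C"] AE_I2)
      fix \<omega> show "norm (gU \<omega> * indicator B (a \<omega>)) \<le> 2*C"
        using bU[of \<omega>] C0 by (auto simp: gU_def indicator_def abs_le_iff)
    qed (use B in auto)
    have i2: "integrable M (\<lambda>\<omega>. C * indicator B (a \<omega>))"
      by (intro integrable_const_bound[where B="C"]) (use B C0 in \<open>auto simp: indicator_def\<close>)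
    have "(LINT \<omega>|M. hU \<omega> * indicator B (a \<omega>)) = (LINT \<omega>|M. gU \<omega> * indicator B (a \<omega>) - C * indicator B (a \<omega>))"
      by (simp add: gU_def algebra_simps)
    also have "\<dots> = (LINT \<omega>|M. gU \<omega> * indicator B (a \<omega>)) - (LINT \<omega>|M. C * indicator B (a \<omega>))"
      by (rule Bochner_Integration.integral_diff[OF i1 i2])
    finally show ?thesis by simp
  qed
  moreover have "(LINT \<omega>|M. hV \<omega> * indicator B (b \<omega>)) = (LINT \<omega>|M. gV \<omega> * indicator B (b \<omega>)) - C * (LINT \<omega>|M. indicator B (b \<omega>))"
  proof -
    have i1: "integrable M (\<lambda>\<omega>. gV \<omega> * indicator B (b \<omega>))"
      proof (intro integrable_const_bound[where B="2*C"] AE_I2)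
      fix \<omega> show "norm (gV \<omega> * indicator B (b \<omega>)) \<le> 2*C"
        using bV[of \<omega>] C0 by (auto simp: gV_def indicator_def abs_le_iff)
    qed (use B in auto)
    have i2: "integrable M (\<lambda>\<omega>. C * indicator B (b \<omega>))"
      by (intro integrable_const_bound[where B="C"]) (use B C0 in \<open>auto simp: indicator_def\<close>)
    have "(LINT \<omega>|M. hV \<omega> * indicator B (b \<omega>)) = (LINT \<omega>|M. gV \<omega> * indicator B (b \<omega>) - C * indicator B (b \<omega>))"
      by (simp add: gV_def algebra_simps)
    also have "\<dots> = (LINT \<omega>|M. gV \<omega> * indicator B (b \<omega>)) - (LINT \<omega>|M. C * indicator B (b \<omega>))"
      by (rule Bochner_Integration.integral_diff[OF i1 i2])
    finally show ?thesis by simp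
  qed
  ultimately show ?thesis using main ind by simp
qed

lemma im_aux: "complex_of_real (Im z) * e = (z * e - cnj z * e) / (2 * \<i>)"
proof -
  have "z * e - cnj z * e = (z - cnj z) * e" by (simp add: left_diff_distrib)
  also have "\<dots> = (2 * \<i>) * (complex_of_real (Im z) * e)" by (simp add: complex_diff_cnj)
  finally show ?thesis by simp
qed
lemma re_aux: "complex_of_real (Re z) * e = (z * e + cnj z * e) / 2"
proof -
  have "z * e + cnj z * e = (z + cnj z) * e" by (simp add: distrib_right)
  also have "\<dots> = 2 * (complex_of_real (Re z) * e)" by (simp add: complex_add_cnj)
  finally show ?thesis by simp
qed

lemma iexp_cnj_neg: "cnj (iexp (- x)) = iexp x"
  by (simp add: exp_cnj)

lemma K_C:
  fixes M :: "'a measure" and a b :: "'a \<Rightarrow> real" and HU HV :: "'a \<Rightarrow> complex"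
  assumes P: "prob_space M"
    and [measurable]: "a \<in> borel_measurable M" "b \<in> borel_measurable M"
      "HU \<in> borel_measurable M" "HV \<in> borel_measurable M"
    and dist: "distr M lborel a = distr M lborel b"
    and bU: "\<And>\<omega>. cmod (HU \<omega>) \<le> C" and bV: "\<And>\<omega>. cmod (HV \<omega>) \<le> C"
    and eq: "\<And>t. (CLINT \<omega>|M. HU \<omega> * iexp (t * a \<omega>))
                 = (CLINT \<omega>|M. HV \<omega> * iexp (t * b \<omega>))"
    and B: "B \<in> sets borel"
  shows "(CLINT \<omega>|M. HU \<omega> * indicator B (a \<omega>)) = (CLINT \<omega>|M. HV \<omega> * indicator B (b \<omega>))"
proof -
  interpret prob_space M by fact
  have intH: "integrable M (\<lambda>\<omega>. H \<omega> * iexp (t * c \<omega>))"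
    if [measurable]: "H \<in> borel_measurable M" "c \<in> borel_measurable M" and bH: "\<And>\<omega>. cmod (H \<omega>) \<le> C" for H c t
    by (intro integrable_const_bound[where B=C] AE_I2) (auto simp: norm_mult bH)
  have reeq: "(CLINT \<omega>|M. complex_of_real (Re (H \<omega>)) * iexp (t * c \<omega>))
     = ((CLINT \<omega>|M. H \<omega> * iexp (t * c \<omega>)) + cnj (CLINT \<omega>|M. H \<omega> * iexp ((-t) * c \<omega>))) / 2"
    if [measurable]: "H \<in> borel_measurable M" "c \<in> borel_measurable M" and bH: "\<And>\<omega>. cmod (H \<omega>) \<le> C" for H c t
  proof -
    have pw: "complex_of_real (Re (H \<omega>)) * iexp (t * c \<omega>) = (H \<omega> * iexp (t * c \<omega>) + cnj (H \<omega> * iexp ((-t) * c \<omega>))) / 2" for \<omega>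
    proof -
      have A: "cnj (H \<omega> * iexp ((-t) * c \<omega>)) = cnj (H \<omega>) * iexp (t * c \<omega>)"
        using iexp_cnj_neg[of "t * c \<omega>"] by simp
      show ?thesis unfolding A by (rule re_aux)
    qed
    show ?thesis unfolding pw integral_divide_zero
        Bochner_Integration.integral_add[OF intH[OF that, of t] integrable_cnj[OF intH[OF that, of "-t"]]]
        by (subst Bochner_Integration.integral_cnj) (rule refl)
  qed
  have imeq: "(CLINT \<omega>|M. complex_of_real (Im (H \<omega>)) * iexp (t * c \<omega>))
     = ((CLINT \<omega>|M. H \<omega> * iexp (t * c \<omega>)) - cnj (CLINT \<omega>|M. H \<omega> * iexp ((-t) * c \<omega>))) / (2 * \<i>)"
    if [measurable]: "H \<in> borel_measurable M" "c \<in> borel_measurable M" and bH: "\<And>\<omega>. cmod (H \<omega>) \<le> C" for H c t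
  proof -
    have pw: "complex_of_real (Im (H \<omega>)) * iexp (t * c \<omega>) = (H \<omega> * iexp (t * c \<omega>) - cnj (H \<omega> * iexp ((-t) * c \<omega>))) / (2 * \<i>)" for \<omega>
    proof -
      have A: "cnj (H \<omega> * iexp ((-t) * c \<omega>)) = cnj (H \<omega>) * iexp (t * c \<omega>)"
        using iexp_cnj_neg[of "t * c \<omega>"] by simp
      show ?thesis unfolding A by (rule im_aux)
    qed
    show ?thesis unfolding pw integral_divide_zero
        Bochner_Integration.integral_diff[OF intH[OF that, of t] integrable_cnj[OF intH[OF that, of "-t"]]]
        by (subst Bochner_Integration.integral_cnj) (rule refl)
  qed
  have R: "(LINT \<omega>|M. Re (HU \<omega>) * indicator B (a \<omega>)) = (LINT \<omega>|M. Re (HV \<omega>) * indicator B (b \<omega>))"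
  proof (rule K_R[OF P _ _ _ _ dist, where C=C])
    fix t
    show "(CLINT \<omega>|M. complex_of_real (Re (HU \<omega>)) * iexp (t * a \<omega>)) = (CLINT \<omega>|M. complex_of_real (Re (HV \<omega>)) * iexp (t * b \<omega>))"
      unfolding reeq[OF \<open>HU \<in> borel_measurable M\<close> \<open>a \<in> borel_measurable M\<close> bU]
        reeq[OF \<open>HV \<in> borel_measurable M\<close> \<open>b \<in> borel_measurable M\<close> bV] eq ..
  qed (use bU bV B in \<open>auto intro: order_trans[OF abs_Re_le_cmod]\<close>)
  have I: "(LINT \<omega>|M. Im (HU \<omega>) * indicator B (a \<omega>)) = (LINT \<omega>|M. Im (HV \<omega>) * indicator B (b \<omega>))"
  proof (rule K_R[OF P _ _ _ _ dist, where C=C])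
    fix t
    show "(CLINT \<omega>|M. complex_of_real (Im (HU \<omega>)) * iexp (t * a \<omega>)) = (CLINT \<omega>|M. complex_of_real (Im (HV \<omega>)) * iexp (t * b \<omega>))"
      unfolding imeq[OF \<open>HU \<in> borel_measurable M\<close> \<open>a \<in> borel_measurable M\<close> bU]
        imeq[OF \<open>HV \<in> borel_measurable M\<close> \<open>b \<in> borel_measurable M\<close> bV] eq ..
  qed (use bU bV B in \<open>auto intro: order_trans[OF abs_Im_le_cmod]\<close>)
  have split: "(CLINT \<omega>|M. H \<omega> * indicator B (c \<omega>)) =
      complex_of_real (LINT \<omega>|M. Re (H \<omega>) * indicator B (c \<omega>)) + \<i> * complex_of_real (LINT \<omega>|M. Im (H \<omega>) * indicator B (c \<omega>))"
    if [measurable]: "H \<in> borel_measurable M" "c \<in> borel_measurable M" and bH: "\<And>\<omega>. cmod (H \<omega>) \<le> C" for H c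
  proof -
    have C0: "0 \<le> C" using bH[of undefined] norm_ge_zero order_trans by blast
    have i1: "integrable M (\<lambda>\<omega>. complex_of_real (Re (H \<omega>) * indicator B (c \<omega>)))"
      by (intro integrable_const_bound[where B=C] AE_I2) (use B bH C0 in \<open>auto simp: indicator_def intro: order_trans[OF abs_Re_le_cmod]\<close>)
    have i2: "integrable M (\<lambda>\<omega>. \<i> * complex_of_real (Im (H \<omega>) * indicator B (c \<omega>)))"
      by (intro integrable_const_bound[where B=C] AE_I2) (use B bH C0 in \<open>auto simp: indicator_def norm_mult intro: order_trans[OF abs_Im_le_cmod]\<close>)
    have pw: "H \<omega> * indicator B (c \<omega>) = complex_of_real (Re (H \<omega>) * indicator B (c \<omega>)) + \<i> * complex_of_real (Im (H \<omega>) * indicator B (c \<omega>))" for \<omega>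
      by (simp add: indicator_def complex_eq_iff)
    show ?thesis unfolding pw Bochner_Integration.integral_add[OF i1 i2] integral_mult_right_zero integral_complex_of_real ..
  qed
  show ?thesis
    using split[of HU a] split[of HV b] R I bU bV by simp
qed


lemma iexp_add: "iexp (x + y) = iexp x * iexp y"
  by (simp add: distrib_left exp_add)

lemma CW_claim:
  fixes M :: "'a measure" and U V :: "nat \<Rightarrow> 'a \<Rightarrow> real" and n :: nat
  assumes P: "prob_space M"
    and mU: "\<And>i. i < n \<Longrightarrow> U i \<in> borel_measurable M"
    and mV: "\<And>i. i < n \<Longrightarrow> V i \<in> borel_measurable M"
    and lin: "\<And>c. distr M lborel (\<lambda>\<omega>. \<Sum>i<n. c i * U i \<omega>) = distr M lborel (\<lambda>\<omega>. \<Sum>i<n. c i * V i \<omega>)"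
  shows "k \<le> n \<Longrightarrow> (\<forall>j. A j \<in> sets borel) \<Longrightarrow>
    (CLINT \<omega>|M. complex_of_real (\<Prod>j<k. indicator (A j) (U j \<omega>)) * iexp (\<Sum>j\<in>{k..<n}. s j * U j \<omega>))
  = (CLINT \<omega>|M. complex_of_real (\<Prod>j<k. indicator (A j) (V j \<omega>)) * iexp (\<Sum>j\<in>{k..<n}. s j * V j \<omega>))"
proof (induction k arbitrary: s)
  case 0
  interpret prob_space M by fact
  have mS[measurable]: "(\<lambda>\<omega>. \<Sum>i<n. s i * W i \<omega>) \<in> borel_measurable M"
    if "\<And>i. i < n \<Longrightarrow> W i \<in> borel_measurable M" for W
    using that by (intro borel_measurable_sum borel_measurable_times) auto
  have "(CLINT \<omega>|M. iexp (\<Sum>j<n. s j * U j \<omega>)) = (CLINT x|distr M lborel (\<lambda>\<omega>. \<Sum>i<n. s i * U i \<omega>). iexp x)"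
    by (subst integral_distr) (use mS[OF mU] in auto)
  also have "\<dots> = (CLINT x|distr M lborel (\<lambda>\<omega>. \<Sum>i<n. s i * V i \<omega>). iexp x)" by (simp only: lin)
  also have "\<dots> = (CLINT \<omega>|M. iexp (\<Sum>j<n. s j * V j \<omega>))"
    by (subst integral_distr) (use mS[OF mV] in auto)
  finally show ?case by (simp add: atLeast0LessThan)
next
  case (Suc k)
  interpret prob_space M by fact
  have kn: "k < n" using Suc.prems by simp
  have [measurable]: "U k \<in> borel_measurable M" "V k \<in> borel_measurable M" using mU mV kn by auto
  define HU where "HU \<omega> = complex_of_real (\<Prod>j<k. indicator (A j) (U j \<omega>)) * iexp (\<Sum>j\<in>{Suc k..<n}. s j * U j \<omega>)" for \<omega>
  define HV where "HV \<omega> = complex_of_real (\<Prod>j<k. indicator (A j) (V j \<omega>)) * iexp (\<Sum>j\<in>{Suc k..<n}. s j * V j \<omega>)" for \<omega>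
  have mH: "(\<lambda>\<omega>. complex_of_real (\<Prod>j<k. indicator (A j) (W j \<omega>)) * iexp (\<Sum>j\<in>{Suc k..<n}. s j * W j \<omega>)) \<in> borel_measurable M"
    if "\<And>i. i < n \<Longrightarrow> W i \<in> borel_measurable M" for W
  proof -
    have [measurable]: "(\<lambda>\<omega>. \<Prod>j<k. indicator (A j) (W j \<omega>) :: real) \<in> borel_measurable M"
      using that kn Suc.prems(2) by (intro borel_measurable_prod) (auto intro!: borel_measurable_indicator' measurable_compose[of _ M borel])
    have [measurable]: "(\<lambda>\<omega>. \<Sum>j\<in>{Suc k..<n}. s j * W j \<omega>) \<in> borel_measurable M"
      using that by (intro borel_measurable_sum borel_measurable_times) auto
    show ?thesis by measurable
  qed
  have [measurable]: "HU \<in> borel_measurable M" "HV \<in> borel_measurable M"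
    unfolding HU_def[abs_def] HV_def[abs_def] using mH mU mV by auto
  have bnd: "cmod (complex_of_real (\<Prod>j<k. indicator (A j) (W j \<omega>)) * iexp x) \<le> 1" for W \<omega> x
  proof -
    have 0: "0 \<le> (\<Prod>j<k. indicator (A j) (W j \<omega>) :: real)" by (rule prod_nonneg) simp
    have 1: "(\<Prod>j<k. indicator (A j) (W j \<omega>) :: real) \<le> 1" by (rule prod_le_1) simp
    have "cmod (complex_of_real (\<Prod>j<k. indicator (A j) (W j \<omega>)) * iexp x) = \<bar>\<Prod>j<k. indicator (A j) (W j \<omega>) :: real\<bar>"
      by (simp only: norm_mult norm_of_real) simp
    then show ?thesis using 0 1 by simp
  qed
  have split: "(\<Sum>j\<in>{k..<n}. (s(k := t)) j * W j \<omega>) = t * W k \<omega> + (\<Sum>j\<in>{Suc k..<n}. s j * W j \<omega>)" for W \<omega> t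
    using kn by (simp add: sum.atLeast_Suc_lessThan)
  have eq: "(CLINT \<omega>|M. HU \<omega> * iexp (t * U k \<omega>)) = (CLINT \<omega>|M. HV \<omega> * iexp (t * V k \<omega>))" for t
    using Suc.IH[of "s(k := t)"] Suc.prems unfolding HU_def HV_def split iexp_add
    by (simp add: mult_ac)
  have dk: "distr M lborel (U k) = distr M lborel (V k)"
  proof -
    have e: "(\<Sum>i<n. (if i = k then 1 else 0) * W i \<omega>) = W k \<omega>" for W :: "nat \<Rightarrow> 'a \<Rightarrow> real" and \<omega>
    proof -
      have "(\<Sum>i<n. (if i = k then 1 else 0) * W i \<omega>) = (\<Sum>i<n. if i = k then W i \<omega> else 0)"
        by (rule sum.cong) auto
      then show ?thesis using kn by simp
    qed
    show ?thesis using lin[of "\<lambda>i. if i = k then 1 else 0"] unfolding e by simp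
  qed
  have "(CLINT \<omega>|M. HU \<omega> * indicator (A k) (U k \<omega>)) = (CLINT \<omega>|M. HV \<omega> * indicator (A k) (V k \<omega>))"
  proof (rule K_C[OF P _ _ _ _ dk, where C=1])
    show "cmod (HU \<omega>) \<le> 1" for \<omega> unfolding HU_def by (rule bnd)
    show "cmod (HV \<omega>) \<le> 1" for \<omega> unfolding HV_def by (rule bnd)
    show "(CLINT \<omega>|M. HU \<omega> * iexp (t * U k \<omega>)) = (CLINT \<omega>|M. HV \<omega> * iexp (t * V k \<omega>))" for t by (rule eq)
    show "A k \<in> sets borel" using Suc.prems by auto
  qed auto
  moreover have rw: "complex_of_real (\<Prod>j<Suc k. indicator (A j) (W j \<omega>)) * iexp (\<Sum>j\<in>{Suc k..<n}. s j * W j \<omega>)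
      = complex_of_real (\<Prod>j<k. indicator (A j) (W j \<omega>)) * iexp (\<Sum>j\<in>{Suc k..<n}. s j * W j \<omega>) * indicator (A k) (W k \<omega>)" for W \<omega>
    by (simp add: indicator_def)
  ultimately show ?case unfolding HU_def HV_def by (simp only: rw)
qed


lemma prod_ind: "finite I \<Longrightarrow> (\<Prod>j\<in>I. indicator (A j) (f j) :: real) = (if \<forall>j\<in>I. f j \<in> A j then 1 else 0)"
  by (induction I rule: finite_induct) (auto simp: indicator_def)

lemma CW:
  fixes M :: "'a measure" and U V :: "nat \<Rightarrow> 'a \<Rightarrow> real" and n :: nat
  assumes P: "prob_space M"
    and mU: "\<And>i. i < n \<Longrightarrow> U i \<in> borel_measurable M"
    and mV: "\<And>i. i < n \<Longrightarrow> V i \<in> borel_measurable M"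
    and lin: "\<And>c. distr M lborel (\<lambda>\<omega>. \<Sum>i<n. c i * U i \<omega>) = distr M lborel (\<lambda>\<omega>. \<Sum>i<n. c i * V i \<omega>)"
  shows "distr M (PiM {..<n} (\<lambda>_. lborel)) (\<lambda>\<omega>. \<lambda>i\<in>{..<n}. U i \<omega>)
       = distr M (PiM {..<n} (\<lambda>_. lborel)) (\<lambda>\<omega>. \<lambda>i\<in>{..<n}. V i \<omega>)"
proof -
  interpret prob_space M by fact
  have mvec: "(\<lambda>\<omega>. \<lambda>i\<in>{..<n}. W i \<omega>) \<in> measurable M (PiM {..<n} (\<lambda>_. lborel))"
    if "\<And>i. i < n \<Longrightarrow> W i \<in> borel_measurable M" for W
    by (rule measurable_restrict) (use that in auto)
  have meas: "measure (distr M (PiM {..<n} (\<lambda>_. lborel)) (\<lambda>\<omega>. \<lambda>i\<in>{..<n}. W i \<omega>)) (Pi\<^sub>E {..<n} A)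
       = (LINT \<omega>|M. (\<Prod>j<n. indicator (A j) (W j \<omega>)))"
    if W: "\<And>i. i < n \<Longrightarrow> W i \<in> borel_measurable M" and A: "\<And>i. i \<in> {..<n} \<Longrightarrow> A i \<in> sets lborel" for W A
  proof -
    let ?D = "distr M (PiM {..<n} (\<lambda>_. lborel)) (\<lambda>\<omega>. \<lambda>i\<in>{..<n}. W i \<omega>)"
    interpret D: prob_space ?D by (rule prob_space_distr[OF mvec[OF W]])
    have S: "Pi\<^sub>E {..<n} A \<in> sets (PiM {..<n} (\<lambda>_. lborel))"
      using A by (intro sets_PiM_I_finite) auto
    have "measure ?D (Pi\<^sub>E {..<n} A) = (LINT x|?D. indicator (Pi\<^sub>E {..<n} A) x)"
      using S by (subst Bochner_Integration.integral_indicator) auto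
    also have "\<dots> = (LINT \<omega>|M. indicator (Pi\<^sub>E {..<n} A) (\<lambda>i\<in>{..<n}. W i \<omega>))"
      using S by (subst integral_distr[OF mvec[OF W]]) auto
    also have "\<dots> = (LINT \<omega>|M. (\<Prod>j<n. indicator (A j) (W j \<omega>)))"
      by (rule Bochner_Integration.integral_cong) (auto simp: prod_ind indicator_def PiE_iff)
    finally show ?thesis .
  qed
  have claim: "(LINT \<omega>|M. (\<Prod>j<n. indicator (A j) (U j \<omega>) :: real)) = (LINT \<omega>|M. (\<Prod>j<n. indicator (A j) (V j \<omega>) :: real))"
    if A: "\<And>i. i \<in> {..<n} \<Longrightarrow> A i \<in> sets lborel" for A
  proof -
    define A' where "A' j = (if j < n then A j else UNIV)" for j
    have "(CLINT \<omega>|M. complex_of_real (\<Prod>j<n. indicator (A' j) (U j \<omega>)) * iexp (\<Sum>j\<in>{n..<n}. 0 * U j \<omega>))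
        = (CLINT \<omega>|M. complex_of_real (\<Prod>j<n. indicator (A' j) (V j \<omega>)) * iexp (\<Sum>j\<in>{n..<n}. 0 * V j \<omega>))"
      by (rule CW_claim[OF P mU mV lin]) (use A in \<open>auto simp: A'_def\<close>)
    hence "complex_of_real (LINT \<omega>|M. (\<Prod>j<n. indicator (A' j) (U j \<omega>))) = complex_of_real (LINT \<omega>|M. (\<Prod>j<n. indicator (A' j) (V j \<omega>)))"
      by (simp only: integral_complex_of_real[symmetric]) simp
    moreover have "(\<Prod>j<n. indicator (A' j) (W j \<omega>)) = (\<Prod>j<n. indicator (A j) (W j \<omega>) :: real)" for W :: "nat \<Rightarrow> 'a \<Rightarrow> real" and \<omega>
      by (rule prod.cong) (auto simp: A'_def)
    ultimately show ?thesis by simp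
  qed
  show ?thesis
  proof (rule measure_eqI_PiM_finite[where A="\<lambda>_. space (PiM {..<n} (\<lambda>_. lborel))"])
    fix A :: "nat \<Rightarrow> real set" assume A: "\<And>i. i \<in> {..<n} \<Longrightarrow> A i \<in> sets lborel"
    interpret DU: prob_space "distr M (PiM {..<n} (\<lambda>_. lborel)) (\<lambda>\<omega>. \<lambda>i\<in>{..<n}. U i \<omega>)"
      by (rule prob_space_distr[OF mvec[OF mU]])
    interpret DV: prob_space "distr M (PiM {..<n} (\<lambda>_. lborel)) (\<lambda>\<omega>. \<lambda>i\<in>{..<n}. V i \<omega>)"
      by (rule prob_space_distr[OF mvec[OF mV]])
    show "emeasure (distr M (PiM {..<n} (\<lambda>_. lborel)) (\<lambda>\<omega>. \<lambda>i\<in>{..<n}. U i \<omega>)) (Pi\<^sub>E {..<n} A)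
        = emeasure (distr M (PiM {..<n} (\<lambda>_. lborel)) (\<lambda>\<omega>. \<lambda>i\<in>{..<n}. V i \<omega>)) (Pi\<^sub>E {..<n} A)"
      using meas[OF mU A] meas[OF mV A] claim[OF A] by (simp add: DU.emeasure_eq_measure DV.emeasure_eq_measure)
  next
    show "range (\<lambda>_. space (PiM {..<n} (\<lambda>_. lborel))) \<subseteq> prod_algebra {..<n} (\<lambda>_. lborel)"
      by (auto simp: space_PiM intro!: prod_algebraI_finite)
  next
    interpret DU: prob_space "distr M (PiM {..<n} (\<lambda>_. lborel)) (\<lambda>\<omega>. \<lambda>i\<in>{..<n}. U i \<omega>)"
      by (rule prob_space_distr[OF mvec[OF mU]])
    show "emeasure (distr M (PiM {..<n} (\<lambda>_. lborel)) (\<lambda>\<omega>. \<lambda>i\<in>{..<n}. U i \<omega>)) (space (PiM {..<n} (\<lambda>_. lborel))) \<noteq> \<infinity>" for i :: nat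
      by (simp add: DU.emeasure_eq_measure)
  qed auto
qed


lemma pw_term:
  fixes a b xl \<beta> \<rho> :: real
  assumes "a - b = 2 * \<beta> * (1 - \<rho>) * xl" "\<beta> > 0" "\<rho> \<le> 1"
  shows "xl * (exp a - exp b) \<ge> 0" and "xl \<noteq> 0 \<Longrightarrow> \<rho> < 1 \<Longrightarrow> xl * (exp a - exp b) > 0"
proof -
  have k: "2 * \<beta> * (1 - \<rho>) \<ge> 0" using assms by simp
  show "xl * (exp a - exp b) \<ge> 0"
  proof (cases "xl \<ge> 0")
    case True
    then have "a \<ge> b" using assms(1) k by (smt (verit) mult_nonneg_nonneg)
    then show ?thesis using True by simp
  next
    case False
    then have "a \<le> b" using assms(1) k by (smt (verit) mult_nonneg_nonpos)
    then show ?thesis using False by (simp add: mult_nonpos_nonpos)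
  qed
  assume "xl \<noteq> 0" "\<rho> < 1"
  then have k': "2 * \<beta> * (1 - \<rho>) > 0" using assms by simp
  show "xl * (exp a - exp b) > 0"
  proof (cases "xl > 0")
    case True
    then have "a > b" using assms(1) k' by (smt (verit) mult_pos_pos)
    then show ?thesis using True by simp
  next
    case False
    then have "xl < 0" using \<open>xl \<noteq> 0\<close> by simp
    then have "a < b" using assms(1) k' by (smt (verit) mult_pos_neg)
    then show ?thesis using \<open>xl < 0\<close> by (simp add: mult_neg_neg)
  qed
qed

lemma pw_softmax:
  fixes x x' \<rho> :: "nat \<Rightarrow> real" and \<beta> :: real
  assumes l: "l < L" and x': "\<And>r. r < L \<Longrightarrow> x' r = x r - 2 * \<rho> r * x l"
    and \<rho>l: "\<rho> l = 1" and \<rho>1: "\<And>r. r < L \<Longrightarrow> \<rho> r \<le> 1" and \<beta>: "\<beta> > 0"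
  shows "x l * (softmax L \<beta> l x - softmax L \<beta> l x') \<ge> 0"
    and "x l \<noteq> 0 \<Longrightarrow> (\<exists>r<L. \<rho> r < 1) \<Longrightarrow> x l * (softmax L \<beta> l x - softmax L \<beta> l x') > 0"
proof -
  define S where "S = (\<Sum>r<L. exp (\<beta> * x r))"
  define S' where "S' = (\<Sum>r<L. exp (\<beta> * x' r))"
  have Sp: "S > 0" unfolding S_def using l by (intro sum_pos) auto
  have S'p: "S' > 0" unfolding S'_def using l by (intro sum_pos) auto
  have x'l: "x' l = - x l" using x'[OF l] \<rho>l by simp
  define D where "D = (\<Sum>r<L. exp (\<beta> * x l + \<beta> * x' r) - exp (\<beta> * x' l + \<beta> * x r))"
  have diff: "softmax L \<beta> l x - softmax L \<beta> l x' = D / (S * S')"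
  proof -
    have "softmax L \<beta> l x - softmax L \<beta> l x' = (exp (\<beta> * x l) * S' - exp (\<beta> * x' l) * S) / (S * S')"
      unfolding softmax_def S_def[symmetric] S'_def[symmetric] using Sp S'p by (simp add: field_simps)
    also have "exp (\<beta> * x l) * S' - exp (\<beta> * x' l) * S = D"
      unfolding D_def S_def S'_def sum_subtractf sum_distrib_left by (simp add: exp_add)
    finally show ?thesis .
  qed
  have terms: "x l * (exp (\<beta> * x l + \<beta> * x' r) - exp (\<beta> * x' l + \<beta> * x r)) \<ge> 0"
    "x l \<noteq> 0 \<Longrightarrow> \<rho> r < 1 \<Longrightarrow> x l * (exp (\<beta> * x l + \<beta> * x' r) - exp (\<beta> * x' l + \<beta> * x r)) > 0"
    if r: "r < L" for r
  proof -
    have "(\<beta> * x l + \<beta> * x' r) - (\<beta> * x' l + \<beta> * x r) = 2 * \<beta> * (1 - \<rho> r) * x l"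
      unfolding x'[OF r] x'l by (simp add: algebra_simps)
    note * = pw_term[OF this \<beta> \<rho>1[OF r]]
    show "x l * (exp (\<beta> * x l + \<beta> * x' r) - exp (\<beta> * x' l + \<beta> * x r)) \<ge> 0" by (rule *(1))
    show "x l \<noteq> 0 \<Longrightarrow> \<rho> r < 1 \<Longrightarrow> x l * (exp (\<beta> * x l + \<beta> * x' r) - exp (\<beta> * x' l + \<beta> * x r)) > 0"
      by (rule *(2))
  qed
  have xD: "x l * D = (\<Sum>r<L. x l * (exp (\<beta> * x l + \<beta> * x' r) - exp (\<beta> * x' l + \<beta> * x r)))"
    unfolding D_def sum_distrib_left ..
  have eq: "x l * (softmax L \<beta> l x - softmax L \<beta> l x') = (x l * D) / (S * S')"
    unfolding diff by simp
  show "x l * (softmax L \<beta> l x - softmax L \<beta> l x') \<ge> 0"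
    unfolding eq xD using terms(1) Sp S'p by (intro divide_nonneg_pos sum_nonneg) auto
  assume "x l \<noteq> 0" "\<exists>r<L. \<rho> r < 1"
  then obtain r where r: "r < L" "\<rho> r < 1" by auto
  have "x l * D > 0"
    unfolding xD by (rule sum_pos2[of _ r]) (use terms r \<open>x l \<noteq> 0\<close> in auto)
  then show "x l * (softmax L \<beta> l x - softmax L \<beta> l x') > 0"
    unfolding eq using Sp S'p by simp
qed


lemma gauss_meas:
  assumes "centered_gaussian_vector M L X" "i < L"
  shows "X i \<in> borel_measurable M"
  using assms unfolding centered_gaussian_vector_def by auto

lemma gauss_cases:
  assumes "centered_gaussian_vector M L X"
  shows "(AE \<omega> in M. (\<Sum>i<L. c i * X i \<omega>) = 0) \<or>
         (\<exists>\<sigma>>0. distributed M lborel (\<lambda>\<omega>. \<Sum>i<L. c i * X i \<omega>) (\<lambda>x. ennreal (normal_density 0 \<sigma> x)))"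
  using assms unfolding centered_gaussian_vector_def Let_def by blast

lemma normal_sq:
  assumes P: "prob_space M" and \<sigma>: "\<sigma> > 0"
    and D: "distributed M lborel Y (\<lambda>x. ennreal (normal_density 0 \<sigma> x))"
  shows "integrable M (\<lambda>\<omega>. (Y \<omega>)\<^sup>2)" "prob_space.expectation M (\<lambda>\<omega>. (Y \<omega>)\<^sup>2) = \<sigma>\<^sup>2"
proof -
  have "integrable lborel (\<lambda>x. normal_density 0 \<sigma> x * x\<^sup>2)"
    using integrable_normal_moment[where \<mu>=0 and \<sigma>=\<sigma> and k=2] \<sigma> by (simp only: diff_zero)
  then show "integrable M (\<lambda>\<omega>. (Y \<omega>)\<^sup>2)"
    using distributed_integrable[OF D, of "\<lambda>x. x\<^sup>2"] by simp
  have "(\<integral>x. normal_density 0 \<sigma> x * x\<^sup>2 \<partial>lborel) = \<sigma>\<^sup>2"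
    using integral_normal_moment_even[where \<mu>=0 and \<sigma>=\<sigma> and k=1] \<sigma> by (simp add: power2_eq_square)
  then show "prob_space.expectation M (\<lambda>\<omega>. (Y \<omega>)\<^sup>2) = \<sigma>\<^sup>2"
    using distributed_integral[OF D, of "\<lambda>x. x\<^sup>2"] by simp
qed

lemma gauss_sq:
  assumes P: "prob_space M" and G: "centered_gaussian_vector M L X"
  shows "integrable M (\<lambda>\<omega>. (\<Sum>i<L. c i * X i \<omega>)\<^sup>2)"
    and "(AE \<omega> in M. (\<Sum>i<L. c i * X i \<omega>) = 0) \<and> prob_space.expectation M (\<lambda>\<omega>. (\<Sum>i<L. c i * X i \<omega>)\<^sup>2) = 0
      \<or> (\<exists>\<sigma>>0. distributed M lborel (\<lambda>\<omega>. \<Sum>i<L. c i * X i \<omega>) (\<lambda>x. ennreal (normal_density 0 \<sigma> x))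
           \<and> prob_space.expectation M (\<lambda>\<omega>. (\<Sum>i<L. c i * X i \<omega>)\<^sup>2) = \<sigma>\<^sup>2)"
proof -
  have [measurable]: "(\<lambda>\<omega>. \<Sum>i<L. c i * X i \<omega>) \<in> borel_measurable M"
    using gauss_meas[OF G] by (intro borel_measurable_sum borel_measurable_times) auto
  from gauss_cases[OF G, of c]
  have "integrable M (\<lambda>\<omega>. (\<Sum>i<L. c i * X i \<omega>)\<^sup>2) \<and> ((AE \<omega> in M. (\<Sum>i<L. c i * X i \<omega>) = 0) \<and> prob_space.expectation M (\<lambda>\<omega>. (\<Sum>i<L. c i * X i \<omega>)\<^sup>2) = 0
      \<or> (\<exists>\<sigma>>0. distributed M lborel (\<lambda>\<omega>. \<Sum>i<L. c i * X i \<omega>) (\<lambda>x. ennreal (normal_density 0 \<sigma> x))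
           \<and> prob_space.expectation M (\<lambda>\<omega>. (\<Sum>i<L. c i * X i \<omega>)\<^sup>2) = \<sigma>\<^sup>2))"
  proof
    assume AE: "AE \<omega> in M. (\<Sum>i<L. c i * X i \<omega>) = 0"
    have AE2: "AE \<omega> in M. (\<Sum>i<L. c i * X i \<omega>)\<^sup>2 = 0" using AE by eventually_elim simp
    have "integrable M (\<lambda>\<omega>. (\<Sum>i<L. c i * X i \<omega>)\<^sup>2)"
      using integrable_cong_AE[of "\<lambda>\<omega>. (\<Sum>i<L. c i * X i \<omega>)\<^sup>2" M "\<lambda>_. 0"] AE2 by simp
    moreover have "prob_space.expectation M (\<lambda>\<omega>. (\<Sum>i<L. c i * X i \<omega>)\<^sup>2) = 0"
      using integral_eq_zero_AE[OF AE2] .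
    ultimately show ?thesis using AE by blast
  next
    assume "\<exists>\<sigma>>0. distributed M lborel (\<lambda>\<omega>. \<Sum>i<L. c i * X i \<omega>) (\<lambda>x. ennreal (normal_density 0 \<sigma> x))"
    then obtain \<sigma> where s: "\<sigma> > 0" and D: "distributed M lborel (\<lambda>\<omega>. \<Sum>i<L. c i * X i \<omega>) (\<lambda>x. ennreal (normal_density 0 \<sigma> x))"
      by blast
    show ?thesis using normal_sq[OF P s D] s D by blast
  qed
  then show "integrable M (\<lambda>\<omega>. (\<Sum>i<L. c i * X i \<omega>)\<^sup>2)"
    and "(AE \<omega> in M. (\<Sum>i<L. c i * X i \<omega>) = 0) \<and> prob_space.expectation M (\<lambda>\<omega>. (\<Sum>i<L. c i * X i \<omega>)\<^sup>2) = 0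
      \<or> (\<exists>\<sigma>>0. distributed M lborel (\<lambda>\<omega>. \<Sum>i<L. c i * X i \<omega>) (\<lambda>x. ennreal (normal_density 0 \<sigma> x))
           \<and> prob_space.expectation M (\<lambda>\<omega>. (\<Sum>i<L. c i * X i \<omega>)\<^sup>2) = \<sigma>\<^sup>2)" by blast+
qed

lemma lawQ:
  assumes P: "prob_space M" and G: "centered_gaussian_vector M L X"
    and Q: "prob_space.expectation M (\<lambda>\<omega>. (\<Sum>i<L. c i * X i \<omega>)\<^sup>2) = prob_space.expectation M (\<lambda>\<omega>. (\<Sum>i<L. d i * X i \<omega>)\<^sup>2)"
  shows "distr M lborel (\<lambda>\<omega>. \<Sum>i<L. c i * X i \<omega>) = distr M lborel (\<lambda>\<omega>. \<Sum>i<L. d i * X i \<omega>)"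
proof -
  have [measurable]: "(\<lambda>\<omega>. \<Sum>i<L. e i * X i \<omega>) \<in> borel_measurable M" for e
    using gauss_meas[OF G] by (intro borel_measurable_sum borel_measurable_times) auto
  note C = gauss_sq(2)[OF P G, of c] and D = gauss_sq(2)[OF P G, of d]
  show ?thesis
  proof (cases "AE \<omega> in M. (\<Sum>i<L. c i * X i \<omega>) = 0")
    case True
    have AE2: "AE \<omega> in M. (\<Sum>i<L. c i * X i \<omega>)\<^sup>2 = 0" using True by eventually_elim simp
    have Q0: "prob_space.expectation M (\<lambda>\<omega>. (\<Sum>i<L. d i * X i \<omega>)\<^sup>2) = 0"
      using integral_eq_zero_AE[OF AE2] Q by simp
    have AEd: "AE \<omega> in M. (\<Sum>i<L. d i * X i \<omega>) = 0"
      using D Q0 by auto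
    have "distr M lborel (\<lambda>\<omega>. \<Sum>i<L. c i * X i \<omega>) = distr M lborel (\<lambda>_. 0)"
      by (rule distr_cong_AE) (use True in auto)
    also have "\<dots> = distr M lborel (\<lambda>\<omega>. \<Sum>i<L. d i * X i \<omega>)"
      by (rule distr_cong_AE) (use AEd in auto)
    finally show ?thesis .
  next
    case False
    then obtain \<sigma> where s: "\<sigma> > 0" and Dc: "distributed M lborel (\<lambda>\<omega>. \<Sum>i<L. c i * X i \<omega>) (\<lambda>x. ennreal (normal_density 0 \<sigma> x))"
      and Ec: "prob_space.expectation M (\<lambda>\<omega>. (\<Sum>i<L. c i * X i \<omega>)\<^sup>2) = \<sigma>\<^sup>2" using C by blast
    have "\<not> (AE \<omega> in M. (\<Sum>i<L. d i * X i \<omega>) = 0)"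
    proof
      assume "AE \<omega> in M. (\<Sum>i<L. d i * X i \<omega>) = 0"
      then have AE2: "AE \<omega> in M. (\<Sum>i<L. d i * X i \<omega>)\<^sup>2 = 0" by eventually_elim simp
      show False using integral_eq_zero_AE[OF AE2] Q Ec s by simp
    qed
    then obtain \<tau> where t: "\<tau> > 0" and Dd: "distributed M lborel (\<lambda>\<omega>. \<Sum>i<L. d i * X i \<omega>) (\<lambda>x. ennreal (normal_density 0 \<tau> x))"
      and Ed: "prob_space.expectation M (\<lambda>\<omega>. (\<Sum>i<L. d i * X i \<omega>)\<^sup>2) = \<tau>\<^sup>2" using D by blast
    have "\<sigma>\<^sup>2 = \<tau>\<^sup>2" using Ec Ed Q by simp
    then have "\<sigma> = \<tau>" using s t by (simp add: power2_eq_iff_nonneg)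
    then show ?thesis
      using distributed_distr_eq_density[OF Dc] distributed_distr_eq_density[OF Dd] by simp
  qed
qed


lemma softmax_bounds:
  assumes "l < L"
  shows "0 \<le> softmax L \<beta> l x" "softmax L \<beta> l x \<le> 1"
proof -
  have S: "exp (\<beta> * x l) \<le> (\<Sum>r<L. exp (\<beta> * x r))"
    using assms by (intro member_le_sum) auto
  have "0 < (\<Sum>r<L. exp (\<beta> * x r))" using assms by (intro sum_pos) auto
  then show "0 \<le> softmax L \<beta> l x" "softmax L \<beta> l x \<le> 1"
    unfolding softmax_def using S by auto
qed

lemma main_l:
  fixes M :: "'a measure" and L :: nat and X :: "nat \<Rightarrow> 'a \<Rightarrow> real"
  assumes P: "prob_space M"
    and G: "centered_gaussian_vector M L X"
    and var: "\<forall>i<L. prob_space.expectation M (\<lambda>\<omega>. (X i \<omega>)\<^sup>2) = 1"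
    and l: "l < L" and \<beta>: "\<beta> > 0"
  shows "prob_space.expectation M (\<lambda>\<omega>. X l \<omega> * softmax L \<beta> l (\<lambda>i. X i \<omega>)) \<ge> 0"
    and "(\<exists>r<L. r \<noteq> l \<and> prob_space.expectation M (\<lambda>\<omega>. X r \<omega> * X l \<omega>) < 1) \<Longrightarrow>
         prob_space.expectation M (\<lambda>\<omega>. X l \<omega> * softmax L \<beta> l (\<lambda>i. X i \<omega>)) > 0"
proof -
  interpret prob_space M by fact
  have mX[measurable]: "X i \<in> borel_measurable M" if "i < L" for i using gauss_meas[OF G that] .
  define Y where "Y c \<omega> = (\<Sum>i<L. c i * X i \<omega>)" for c \<omega>
  define e where "e i = (\<lambda>j. if j = i then 1 else (0::real))" for i :: nat
  have mY[measurable]: "Y c \<in> borel_measurable M" for c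
    unfolding Y_def[abs_def] by (intro borel_measurable_sum borel_measurable_times) auto
  have Ye: "Y (e i) \<omega> = X i \<omega>" if "i < L" for i \<omega>
  proof -
    have "Y (e i) \<omega> = (\<Sum>j<L. if j = i then X j \<omega> else 0)"
      unfolding Y_def e_def by (rule sum.cong) auto
    then show ?thesis using that by simp
  qed
  have Ye': "Y (e i) = X i" if "i < L" for i using Ye[OF that] by auto
  have sqY: "integrable M (\<lambda>\<omega>. (Y c \<omega>)\<^sup>2)" for c
    unfolding Y_def using gauss_sq(1)[OF P G] .
  have addY: "Y c \<omega> + Y d \<omega> = Y (\<lambda>i. c i + d i) \<omega>" for c d \<omega>
    by (simp add: Y_def sum.distrib distrib_right)
  have prodY: "integrable M (\<lambda>\<omega>. Y c \<omega> * Y d \<omega>)" for c d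
  proof -
    have "(\<lambda>\<omega>. Y c \<omega> * Y d \<omega>) = (\<lambda>\<omega>. ((Y (\<lambda>i. c i + d i) \<omega>)\<^sup>2 - (Y c \<omega>)\<^sup>2 - (Y d \<omega>)\<^sup>2) / 2)"
      by (rule ext) (simp add: addY[symmetric] power2_eq_square algebra_simps)
    then show ?thesis using sqY by simp
  qed
  have XX: "integrable M (\<lambda>\<omega>. X i \<omega> * X j \<omega>)" if "i < L" "j < L" for i j
    using prodY[of "e i" "e j"] Ye'[OF that(1)] Ye'[OF that(2)] by simp
  have X2: "integrable M (\<lambda>\<omega>. (X i \<omega>)\<^sup>2)" if "i < L" for i
    using sqY[of "e i"] Ye'[OF that] by simp
  have YX: "integrable M (\<lambda>\<omega>. Y c \<omega> * X l \<omega>)" for c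
    using prodY[of c "e l"] Ye'[OF l] by simp
  define \<rho> where "\<rho> r = expectation (\<lambda>\<omega>. X r \<omega> * X l \<omega>)" for r
  have \<rho>l: "\<rho> l = 1" using var l unfolding \<rho>_def by (simp add: power2_eq_square)
  have \<rho>1: "\<rho> r \<le> 1" if r: "r < L" for r
  proof -
    have "0 \<le> expectation (\<lambda>\<omega>. (X r \<omega> - X l \<omega>)\<^sup>2)" by (rule Bochner_Integration.integral_nonneg) simp
    also have "expectation (\<lambda>\<omega>. (X r \<omega> - X l \<omega>)\<^sup>2)
        = expectation (\<lambda>\<omega>. (X r \<omega>)\<^sup>2) - 2 * \<rho> r + expectation (\<lambda>\<omega>. (X l \<omega>)\<^sup>2)"
    proof -
      have "(\<lambda>\<omega>. (X r \<omega> - X l \<omega>)\<^sup>2) = (\<lambda>\<omega>. ((X r \<omega>)\<^sup>2 - 2 * (X r \<omega> * X l \<omega>)) + (X l \<omega>)\<^sup>2)"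
        by (rule ext) (simp add: power2_eq_square algebra_simps)
      then show ?thesis unfolding \<rho>_def
        using X2[OF r] X2[OF l] XX[OF r l] by simp
    qed
    finally show ?thesis using var r l by simp
  qed
  define X' where "X' r \<omega> = X r \<omega> - 2 * \<rho> r * X l \<omega>" for r \<omega>
  have mX'[measurable]: "X' i \<in> borel_measurable M" if "i < L" for i
    unfolding X'_def[abs_def] using that l by measurable
  have X'l: "X' l \<omega> = - X l \<omega>" for \<omega> unfolding X'_def \<rho>l by simp
  have lin: "distr M lborel (\<lambda>\<omega>. \<Sum>i<L. c i * X i \<omega>) = distr M lborel (\<lambda>\<omega>. \<Sum>i<L. c i * X' i \<omega>)" for c
  proof -
    define \<kappa> where "\<kappa> = (\<Sum>i<L. c i * \<rho> i)"
    define d where "d i = c i - (if i = l then 2 * \<kappa> else 0)" for i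
    have Yd: "Y d \<omega> = Y c \<omega> - 2 * \<kappa> * X l \<omega>" for \<omega>
    proof -
      have "Y d \<omega> = Y c \<omega> - (\<Sum>i<L. if i = l then 2 * \<kappa> * X i \<omega> else 0)"
        unfolding Y_def d_def sum_subtractf[symmetric] by (rule sum.cong) (auto simp: algebra_simps)
      then show ?thesis using l by simp
    qed
    have Y'eq: "(\<Sum>i<L. c i * X' i \<omega>) = Y d \<omega>" for \<omega>
      unfolding Yd unfolding Y_def X'_def \<kappa>_def
      by (simp add: right_diff_distrib sum_subtractf sum_distrib_right sum_distrib_left mult_ac)
    have EYX: "expectation (\<lambda>\<omega>. Y c \<omega> * X l \<omega>) = \<kappa>"
    proof -
      have "expectation (\<lambda>\<omega>. Y c \<omega> * X l \<omega>) = expectation (\<lambda>\<omega>. \<Sum>i<L. c i * (X i \<omega> * X l \<omega>))"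
        unfolding Y_def sum_distrib_right by (simp add: mult_ac)
      also have "\<dots> = (\<Sum>i<L. c i * \<rho> i)"
        unfolding \<rho>_def using XX l by (subst Bochner_Integration.integral_sum) auto
      finally show ?thesis unfolding \<kappa>_def .
    qed
    have Q: "expectation (\<lambda>\<omega>. (Y d \<omega>)\<^sup>2) = expectation (\<lambda>\<omega>. (Y c \<omega>)\<^sup>2)"
    proof -
      have "(\<lambda>\<omega>. (Y d \<omega>)\<^sup>2) = (\<lambda>\<omega>. ((Y c \<omega>)\<^sup>2 - 4 * \<kappa> * (Y c \<omega> * X l \<omega>)) + 4 * \<kappa>\<^sup>2 * (X l \<omega>)\<^sup>2)"
        by (rule ext) (simp add: Yd power2_eq_square algebra_simps)
      then have "expectation (\<lambda>\<omega>. (Y d \<omega>)\<^sup>2) = expectation (\<lambda>\<omega>. (Y c \<omega>)\<^sup>2) - 4 * \<kappa> * expectation (\<lambda>\<omega>. Y c \<omega> * X l \<omega>) + 4 * \<kappa>\<^sup>2 * expectation (\<lambda>\<omega>. (X l \<omega>)\<^sup>2)"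
        using sqY[of c] YX[of c] X2[OF l] by simp
      then show ?thesis using EYX var l by (simp add: power2_eq_square)
    qed
    have "distr M lborel (Y c) = distr M lborel (Y d)"
      using lawQ[OF P G Q[unfolded Y_def, symmetric]] unfolding Y_def[abs_def] .
    also have "Y d = (\<lambda>\<omega>. \<Sum>i<L. c i * X' i \<omega>)" using Y'eq by auto
    finally show ?thesis unfolding Y_def[abs_def] .
  qed
  have CWe: "distr M (PiM {..<L} (\<lambda>_. lborel)) (\<lambda>\<omega>. \<lambda>i\<in>{..<L}. X i \<omega>)
       = distr M (PiM {..<L} (\<lambda>_. lborel)) (\<lambda>\<omega>. \<lambda>i\<in>{..<L}. X' i \<omega>)"
    by (rule CW[OF P mX mX' lin])
  have mv: "(\<lambda>\<omega>. \<lambda>i\<in>{..<L}. W i \<omega>) \<in> measurable M (PiM {..<L} (\<lambda>_. lborel))"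
    if "\<And>i. i < L \<Longrightarrow> W i \<in> borel_measurable M" for W
    by (rule measurable_restrict) (use that in auto)
  define F where "F x = x l * softmax L \<beta> l x" for x :: "nat \<Rightarrow> real"
  have mF: "F \<in> borel_measurable (PiM {..<L} (\<lambda>_. lborel))"
  proof -
    have c[measurable]: "(\<lambda>x. x i) \<in> borel_measurable (PiM {..<L} (\<lambda>_. lborel))" if "i < L" for i
      using measurable_component_singleton[of i "{..<L}" "\<lambda>_. lborel"] that by simp
    have "(\<lambda>x. \<Sum>r<L. exp (\<beta> * x r)) \<in> borel_measurable (PiM {..<L} (\<lambda>_. lborel))"
      by (intro borel_measurable_sum borel_measurable_exp borel_measurable_times) (auto intro: c)
    then show ?thesis unfolding F_def[abs_def] softmax_def using c[OF l] by measurable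
  qed
  have Frest: "F (\<lambda>i\<in>{..<L}. W i \<omega>) = W l \<omega> * softmax L \<beta> l (\<lambda>i. W i \<omega>)" for W :: "nat \<Rightarrow> 'a \<Rightarrow> real" and \<omega>
    unfolding F_def softmax_def using l by (simp add: restrict_def)
  have transfer: "expectation (\<lambda>\<omega>. X l \<omega> * softmax L \<beta> l (\<lambda>i. X i \<omega>))
      = expectation (\<lambda>\<omega>. X' l \<omega> * softmax L \<beta> l (\<lambda>i. X' i \<omega>))"
  proof -
    have "expectation (\<lambda>\<omega>. X l \<omega> * softmax L \<beta> l (\<lambda>i. X i \<omega>))
        = expectation (\<lambda>\<omega>. F (\<lambda>i\<in>{..<L}. X i \<omega>))" unfolding Frest ..
    also have "\<dots> = (LINT x|distr M (PiM {..<L} (\<lambda>_. lborel)) (\<lambda>\<omega>. \<lambda>i\<in>{..<L}. X i \<omega>). F x)"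
      by (rule integral_distr[symmetric, OF mv[OF mX] mF])
    also have "\<dots> = (LINT x|distr M (PiM {..<L} (\<lambda>_. lborel)) (\<lambda>\<omega>. \<lambda>i\<in>{..<L}. X' i \<omega>). F x)"
      unfolding CWe ..
    also have "\<dots> = expectation (\<lambda>\<omega>. F (\<lambda>i\<in>{..<L}. X' i \<omega>))"
      by (rule integral_distr[OF mv[OF mX'] mF])
    also have "\<dots> = expectation (\<lambda>\<omega>. X' l \<omega> * softmax L \<beta> l (\<lambda>i. X' i \<omega>))" unfolding Frest ..
    finally show ?thesis .
  qed
  have mS: "(\<lambda>\<omega>. softmax L \<beta> l (\<lambda>i. W i \<omega>)) \<in> borel_measurable M"
    if "\<And>i. i < L \<Longrightarrow> W i \<in> borel_measurable M" for W
    unfolding softmax_def using that l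
  proof -
    have [measurable]: "W i \<in> borel_measurable M" if "i < L" for i using that \<open>\<And>i. i < L \<Longrightarrow> W i \<in> borel_measurable M\<close> by blast
    have "(\<lambda>\<omega>. \<Sum>r<L. exp (\<beta> * W r \<omega>)) \<in> borel_measurable M"
      by (intro borel_measurable_sum) (auto)
    then show "(\<lambda>\<omega>. exp (\<beta> * W l \<omega>) / (\<Sum>r<L. exp (\<beta> * W r \<omega>))) \<in> borel_measurable M"
      using l by measurable
  qed
  have intXS: "integrable M (\<lambda>\<omega>. X l \<omega> * softmax L \<beta> l (\<lambda>i. W i \<omega>))"
    if "\<And>i. i < L \<Longrightarrow> W i \<in> borel_measurable M" for W
  proof (rule Bochner_Integration.integrable_bound[where f="\<lambda>\<omega>. 1 + (X l \<omega>)\<^sup>2"])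
    show "integrable M (\<lambda>\<omega>. 1 + (X l \<omega>)\<^sup>2)" using X2[OF l] by simp
    show "(\<lambda>\<omega>. X l \<omega> * softmax L \<beta> l (\<lambda>i. W i \<omega>)) \<in> borel_measurable M"
      using mS[OF that] l by measurable
    show "AE \<omega> in M. norm (X l \<omega> * softmax L \<beta> l (\<lambda>i. W i \<omega>)) \<le> norm (1 + (X l \<omega>)\<^sup>2)"
    proof (intro AE_I2)
      fix \<omega>
      have s: "0 \<le> softmax L \<beta> l (\<lambda>i. W i \<omega>)" "softmax L \<beta> l (\<lambda>i. W i \<omega>) \<le> 1"
        using softmax_bounds[OF l] by auto
      have "\<bar>X l \<omega> * softmax L \<beta> l (\<lambda>i. W i \<omega>)\<bar> \<le> \<bar>X l \<omega>\<bar>"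
        using s by (simp add: abs_mult mult_left_le)
      also have "\<dots> \<le> 1 + (X l \<omega>)\<^sup>2"
      proof -
        have "(\<bar>X l \<omega>\<bar> - 1)\<^sup>2 \<ge> 0" by simp
        then show ?thesis by (simp add: power2_eq_square algebra_simps)
      qed
      finally show "norm (X l \<omega> * softmax L \<beta> l (\<lambda>i. W i \<omega>)) \<le> norm (1 + (X l \<omega>)\<^sup>2)" by simp
    qed
  qed
  define f where "f \<omega> = X l \<omega> * (softmax L \<beta> l (\<lambda>i. X i \<omega>) - softmax L \<beta> l (\<lambda>i. X' i \<omega>))" for \<omega>
  have intf: "integrable M f"
    unfolding f_def right_diff_distrib using intXS[OF mX] intXS[OF mX'] by simp
  have Ef: "expectation (\<lambda>\<omega>. X l \<omega> * softmax L \<beta> l (\<lambda>i. X i \<omega>)) = expectation f / 2"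
  proof -
    have "expectation f = expectation (\<lambda>\<omega>. X l \<omega> * softmax L \<beta> l (\<lambda>i. X i \<omega>)) - expectation (\<lambda>\<omega>. X l \<omega> * softmax L \<beta> l (\<lambda>i. X' i \<omega>))"
      unfolding f_def right_diff_distrib using intXS[OF mX] intXS[OF mX'] by simp
    moreover have "expectation (\<lambda>\<omega>. X l \<omega> * softmax L \<beta> l (\<lambda>i. X' i \<omega>)) = - expectation (\<lambda>\<omega>. X l \<omega> * softmax L \<beta> l (\<lambda>i. X i \<omega>))"
      using transfer unfolding X'l by simp
    ultimately show ?thesis by simp
  qed
  have pw: "x l * (softmax L \<beta> l x - softmax L \<beta> l x') \<ge> 0"
    "x l \<noteq> 0 \<Longrightarrow> (\<exists>r<L. \<rho> r < 1) \<Longrightarrow> x l * (softmax L \<beta> l x - softmax L \<beta> l x') > 0"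
    if "\<And>r. r < L \<Longrightarrow> x' r = x r - 2 * \<rho> r * x l" for x x'
    using pw_softmax[where l=l and L=L and x=x and x'=x' and \<rho>=\<rho> and \<beta>=\<beta>, OF l that \<rho>l \<rho>1 \<beta>] by auto
  have f0: "f \<omega> \<ge> 0" for \<omega>
    unfolding f_def by (rule pw(1)) (simp add: X'_def)
  show "expectation (\<lambda>\<omega>. X l \<omega> * softmax L \<beta> l (\<lambda>i. X i \<omega>)) \<ge> 0"
    unfolding Ef using Bochner_Integration.integral_nonneg[of M f] f0 by simp
  assume "\<exists>r<L. r \<noteq> l \<and> expectation (\<lambda>\<omega>. X r \<omega> * X l \<omega>) < 1"
  then have ex\<rho>: "\<exists>r<L. \<rho> r < 1" unfolding \<rho>_def by blast
  have fpos: "X l \<omega> \<noteq> 0 \<Longrightarrow> f \<omega> > 0" for \<omega>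
    unfolding f_def by (rule pw(2)) (auto simp: X'_def ex\<rho>)
  have AEX: "AE \<omega> in M. X l \<omega> \<noteq> 0"
  proof -
    note C = gauss_sq(2)[OF P G, of "e l"]
    have "\<not> ((AE \<omega> in M. Y (e l) \<omega> = 0) \<and> expectation (\<lambda>\<omega>. (Y (e l) \<omega>)\<^sup>2) = 0)"
      using var l Ye'[OF l] by simp
    then obtain \<sigma> where s: "\<sigma> > 0" and D: "distributed M lborel (Y (e l)) (\<lambda>x. ennreal (normal_density 0 \<sigma> x))"
      using C unfolding Y_def[abs_def] by blast
    have "AE x in lborel. x \<noteq> (0::real)" by (rule AE_lborel_singleton)
    then have AEd: "AE x in density lborel (\<lambda>x. ennreal (normal_density 0 \<sigma> x)). x \<noteq> 0"
      by (subst AE_density) (auto elim: eventually_mono)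
    have "AE x in distr M lborel (Y (e l)). x \<noteq> 0"
      unfolding distributed_distr_eq_density[OF D] by (rule AEd)
    then have "AE \<omega> in M. Y (e l) \<omega> \<noteq> 0" by (rule AE_distrD[rotated]) (use mY[of "e l"] in simp)
    then show ?thesis using Ye'[OF l] by simp
  qed
  have "expectation f \<noteq> 0"
  proof
    assume "expectation f = 0"
    then have "AE \<omega> in M. f \<omega> = 0" using integral_nonneg_eq_0_iff_AE[OF intf] f0 by simp
    with AEX have "AE \<omega> in M. False" by eventually_elim (use fpos in fastforce)
    then show False by simp
  qed
  moreover have "expectation f \<ge> 0" using Bochner_Integration.integral_nonneg[of M f] f0 by simp
  ultimately show "expectation (\<lambda>\<omega>. X l \<omega> * softmax L \<beta> l (\<lambda>i. X i \<omega>)) > 0"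
    unfolding Ef by simp
qed



theorem proposition5:
  fixes M :: "'a measure" and L :: nat and X :: "nat \<Rightarrow> 'a \<Rightarrow> real"
  assumes "prob_space M"
    and "L \<ge> 2"
    and "centered_gaussian_vector M L X"
    and "\<forall>i<L. prob_space.expectation M (\<lambda>\<omega>. (X i \<omega>)\<^sup>2) = 1"
  shows "(\<forall>l<L. \<forall>\<beta>>0.
           prob_space.expectation M (\<lambda>\<omega>. X l \<omega> * softmax L \<beta> l (\<lambda>i. X i \<omega>)) \<ge> 0) \<and>
         ((\<forall>i<L. \<forall>j<L. i \<noteq> j \<longrightarrow> prob_space.expectation M (\<lambda>\<omega>. X i \<omega> * X j \<omega>) < 1) \<longrightarrow>
         (\<forall>l<L. \<forall>\<beta>>0.
           prob_space.expectation M (\<lambda>\<omega>. X l \<omega> * softmax L \<beta> l (\<lambda>i. X i \<omega>)) > 0))"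
  proof -
  have A: "\<forall>l<L. \<forall>\<beta>>0.
           prob_space.expectation M (\<lambda>\<omega>. X l \<omega> * softmax L \<beta> l (\<lambda>i. X i \<omega>)) \<ge> 0"
    using main_l(1)[OF assms(1) assms(3) assms(4)] by blast
  have B: "\<forall>l<L. \<forall>\<beta>>0.
           prob_space.expectation M (\<lambda>\<omega>. X l \<omega> * softmax L \<beta> l (\<lambda>i. X i \<omega>)) > 0"
    if H: "\<forall>i<L. \<forall>j<L. i \<noteq> j \<longrightarrow> prob_space.expectation M (\<lambda>\<omega>. X i \<omega> * X j \<omega>) < 1"
  proof (intro allI impI)
    fix l :: nat and \<beta> :: real assume l: "l < L" and \<beta>: "\<beta> > 0"
    define r where "r = (if l = 0 then 1 else (0::nat))"
    have r: "r < L" "r \<noteq> l" using assms(2) l unfolding r_def by auto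
    have "\<exists>r<L. r \<noteq> l \<and> prob_space.expectation M (\<lambda>\<omega>. X r \<omega> * X l \<omega>) < 1"
      using H r l by blast
    then show "prob_space.expectation M (\<lambda>\<omega>. X l \<omega> * softmax L \<beta> l (\<lambda>i. X i \<omega>)) > 0"
      by (rule main_l(2)[OF assms(1) assms(3) assms(4) l \<beta>])
  qed
  show ?thesis using A B by blast
qed

end
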